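(* For every $N\ge 1$ and every integer $r\ge 0$, $$\Pr[\mathcal{R}_2(N)=r]=\frac{1}{(N-1)!}\left[{N-1\atop r}\right],$$ where $\left[{m\atop r}\right]$ denotes the unsigned Stirling number of the first kind (the number of permutations of $\{1,\dots,m\}$ with exactly $r$ cycles, with $\left[{0\atop 0}\right]=1$).
   Context: A random recursive hypergraph (RRH) is the random hypergraph process defined as follows. At size $N=1$ it has vertex set $\{v_1\}$ and edge set $\{\{v_1\}\}$. Given the hypergraph of size $N$ (vertices $v_1,\dots,v_N$, exactly $N$ edges), one chooses an existing edge $e$ uniformly at random, independently of the past, and adds a new vertex $v_{N+1}$ together with the new edge $e\cup\{v_{N+1}\}$. The rank of a vertex $v$ is $\min\{|e| : v\in e\}$. $\mathcal{R}_k(N)$ denotes the number of vertices of rank $k$ in the RRH of size $N$ (equivalently, the number of edges of size $k$). *)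

theory Defs
  imports "HOL-Probability.Probability" "HOL-Combinatorics.Stirling"
begin

text \<open>Vertex v_i is represented by the natural number i;
  a hypergraph is represented by its list of edges (edge i is the edge created at step i).
  rrh N is the distribution of the RRH of size N (for N >= 1).\<close>

fun rrh :: "nat \<Rightarrow> nat set list pmf" where
  "rrh 0 = return_pmf []"
| "rrh (Suc 0) = return_pmf [{1}]"
| "rrh (Suc (Suc n)) =
     bind_pmf (rrh (Suc n)) (\<lambda>es.
       map_pmf (\<lambda>i. es @ [es ! i \<union> {Suc (Suc n)}]) (pmf_of_set {..<length es}))"

definition vrank :: "nat set list \<Rightarrow> nat \<Rightarrow> nat" where
  "vrank H v = Min {card e | e. e \<in> set H \<and> v \<in> e}"

definition rank_count :: "nat \<Rightarrow> nat set list \<Rightarrow> nat" where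
  "rank_count k H = card {v \<in> \<Union> (set H). vrank H v = k}"

end

theory Submission
  imports Defs
begin

definition inv :: "nat set list \<Rightarrow> bool" where
  "inv es \<longleftrightarrow> length es \<ge> 1 \<and> es!0 = {1} \<and>
     (\<forall>j<length es. Suc j \<in> es!j \<and> es!j \<subseteq> {1..Suc j} \<and> (j > 0 \<longrightarrow> card (es!j) \<ge> 2)
        \<and> (\<forall>k<length es. Suc j \<in> es!k \<longrightarrow> es!j \<subseteq> es!k))"

lemma inv_step:
  assumes "inv es" "i < length es"
  shows "inv (es @ [es!i \<union> {Suc (length es)}])"
proof -
  let ?m = "length es"
  let ?e = "es!i \<union> {Suc ?m}"
  let ?f = "es @ [?e]"
  have sub: "\<And>j. j < ?m \<Longrightarrow> es!j \<subseteq> {1..Suc j}" using assms(1) unfolding inv_def by blast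
  have fin: "\<And>j. j < ?m \<Longrightarrow> finite (es!j)" using sub by (meson finite_atLeastAtMost finite_subset)
  have nin: "Suc ?m \<notin> es!j" if "j < ?m" for j using sub[OF that] that by auto
  have nth: "?f!j = (if j < ?m then es!j else ?e)" if "j < Suc ?m" for j
    using that by (auto simp: nth_append less_Suc_eq)
  have cardi: "card ?e = Suc (card (es!i))" using fin[OF assms(2)] nin[OF assms(2)] by simp
  show ?thesis unfolding inv_def
  proof (intro conjI allI impI)
    show "1 \<le> length ?f" by simp
    show "?f!0 = {1}" using assms unfolding inv_def by (auto simp: nth_append)
  next
    fix j assume j: "j < length ?f"
    then have j': "j < Suc ?m" by simp
    show "Suc j \<in> ?f!j" using assms(1) j' unfolding inv_def nth[OF j'] by auto
    show "?f!j \<subseteq> {1..Suc j}"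
    proof (cases "j < ?m")
      case True then show ?thesis using sub unfolding nth[OF j'] by simp
    next
      case False then have "j = ?m" using j' by simp
      then show ?thesis using sub[OF assms(2)] assms(2) unfolding nth[OF j'] by auto
    qed
    show "j > 0 \<Longrightarrow> 2 \<le> card (?f!j)"
    proof -
      assume "j > 0"
      have "card (es!i) \<ge> 1" using assms(1,2) fin[OF assms(2)] unfolding inv_def
        by (metis card_0_eq empty_iff less_one linorder_not_le)
      then show ?thesis using assms(1) j' \<open>j>0\<close> cardi unfolding inv_def nth[OF j'] by auto
    qed
    fix k assume k: "k < length ?f" "Suc j \<in> ?f!k"
    then have k': "k < Suc ?m" by simp
    show "?f!j \<subseteq> ?f!k"
    proof (cases "j < ?m")
      case True
      then have "Suc j \<noteq> Suc ?m" by simp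
      show ?thesis
      proof (cases "k < ?m")
        case True
        then show ?thesis using k \<open>j < ?m\<close> assms(1) unfolding inv_def nth[OF j'] nth[OF k'] by auto
      next
        case False
        then have "Suc j \<in> es!i" using k \<open>Suc j \<noteq> Suc ?m\<close> unfolding nth[OF k'] by auto
        then have "es!j \<subseteq> es!i" using assms \<open>j < ?m\<close> unfolding inv_def by blast
        then show ?thesis using False \<open>j < ?m\<close> unfolding nth[OF j'] nth[OF k'] by auto
      qed
    next
      case False
      then have "j = ?m" using j' by simp
      have "k = ?m"
      proof (rule ccontr)
        assume "k \<noteq> ?m" then have "k < ?m" using k' by simp
        then show False using k \<open>j = ?m\<close> nin unfolding nth[OF k'] by auto
      qed
      then show ?thesis using \<open>j = ?m\<close> by simp
    qed
  qed
qed

lemma set_pmf_lt[simp]: "set_pmf (pmf_of_set {..<Suc m}) = {..<Suc m}"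
  by (rule set_pmf_of_set) auto

lemma rrh_inv: "es \<in> set_pmf (rrh (Suc n)) \<Longrightarrow> inv es \<and> length es = Suc n"
proof (induction n arbitrary: es)
  case 0
  then show ?case by (simp add: inv_def)
next
  case (Suc n)
  from Suc.prems obtain es0 i where es0: "es0 \<in> set_pmf (rrh (Suc n))" and i: "i < length es0"
    and es: "es = es0 @ [es0!i \<union> {Suc (Suc n)}]"
    using Suc.IH by (auto simp: set_pmf_of_set)
  have "length es0 = Suc n" "inv es0" using Suc.IH[OF es0] by auto
  then show ?case using inv_step[OF \<open>inv es0\<close> i] es by simp
qed

definition cnt :: "nat set list \<Rightarrow> nat" where
  "cnt es = card {j. j < length es \<and> card (es!j) = 2}"

lemma rank_count_cnt:
  assumes "inv es"
  shows "rank_count 2 es = cnt es"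
proof -
  let ?m = "length es"
  have sub: "\<And>j. j < ?m \<Longrightarrow> es!j \<subseteq> {1..Suc j}" and mem: "\<And>j. j < ?m \<Longrightarrow> Suc j \<in> es!j"
    and cl: "\<And>j k. j < ?m \<Longrightarrow> k < ?m \<Longrightarrow> Suc j \<in> es!k \<Longrightarrow> es!j \<subseteq> es!k"
    using assms unfolding inv_def by blast+
  have fin: "\<And>j. j < ?m \<Longrightarrow> finite (es!j)" using sub by (meson finite_atLeastAtMost finite_subset)
  have U: "\<Union>(set es) = Suc ` {..<?m}"
  proof
    show "\<Union>(set es) \<subseteq> Suc ` {..<?m}"
    proof
      fix v assume "v \<in> \<Union>(set es)"
      then obtain k where k: "k < ?m" "v \<in> es!k" by (auto simp: in_set_conv_nth)
      then have "v \<in> {1..Suc k}" using sub by blast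
      then show "v \<in> Suc ` {..<?m}" using k(1) by (auto intro!: image_eqI[of _ _ "v - 1"])
    qed
    show "Suc ` {..<?m} \<subseteq> \<Union>(set es)"
    proof
      fix v assume "v \<in> Suc ` {..<?m}"
      then obtain j where "j < ?m" "v = Suc j" by auto
      then show "v \<in> \<Union>(set es)" using mem nth_mem by blast
    qed
  qed
  have vr: "vrank es (Suc j) = card (es!j)" if j: "j < ?m" for j
  proof -
    let ?S = "{card e |e. e \<in> set es \<and> Suc j \<in> e}"
    have "?S \<subseteq> card ` set es" by auto
    then have "finite ?S" by (meson finite_imageI finite_set finite_subset)
    moreover have "card (es!j) \<in> ?S" using j mem by auto
    moreover have "\<forall>x\<in>?S. card (es!j) \<le> x"
    proof
      fix x assume "x \<in> ?S"
      then obtain k where "k < ?m" "x = card (es!k)" "Suc j \<in> es!k" by (auto simp: in_set_conv_nth)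
      then show "card (es!j) \<le> x" using cl[OF j] fin by (simp add: card_mono)
    qed
    ultimately show ?thesis unfolding vrank_def by (metis (no_types, lifting) Min_eqI)
  qed
  have "{v \<in> \<Union>(set es). vrank es v = 2} = Suc ` {j. j < ?m \<and> card (es!j) = 2}"
    unfolding U using vr by auto
  then show ?thesis unfolding rank_count_def cnt_def by (simp add: card_image)
qed

lemma cnt_step:
  assumes "inv es" "i < length es"
  shows "cnt (es @ [es!i \<union> {Suc (length es)}]) = cnt es + of_bool (i = 0)"
proof -
  let ?m = "length es"
  let ?e = "es!i \<union> {Suc ?m}"
  have sub: "\<And>j. j < ?m \<Longrightarrow> es!j \<subseteq> {1..Suc j}" using assms(1) unfolding inv_def by blast
  have fin: "finite (es!i)" using sub[OF assms(2)] by (meson finite_atLeastAtMost finite_subset)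
  have nin: "Suc ?m \<notin> es!i" using sub[OF assms(2)] assms(2) by auto
  have cardi: "card ?e = Suc (card (es!i))" using fin nin by simp
  have c1: "card (es!i) = 1 \<longleftrightarrow> i = 0"
    using assms unfolding inv_def by (metis One_nat_def card.empty card.insert empty_iff finite.emptyI gr0I not_less_eq_eq numeral_2_eq_2 le_zero_eq)
  have eq: "{j. j < Suc ?m \<and> card ((es @ [?e])!j) = 2} =
     (if i = 0 then insert ?m else id) {j. j < ?m \<and> card (es!j) = 2}"
    using cardi c1 by (auto simp: nth_append less_Suc_eq)
  show ?thesis unfolding cnt_def using eq by (simp add: cnt_def)
qed

fun D :: "nat \<Rightarrow> nat pmf" where
  "D 0 = return_pmf 0"
| "D (Suc n) = bind_pmf (pmf_of_set {..<Suc n}) (\<lambda>i. map_pmf (\<lambda>c. c + of_bool (i = 0)) (D n))"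

lemma map_rrh: "map_pmf (rank_count 2) (rrh (Suc n)) = D n"
proof (induction n)
  case 0
  then show ?case by (simp add: rank_count_def vrank_def)
next
  case (Suc n)
  have "map_pmf (rank_count 2) (rrh (Suc (Suc n))) =
    bind_pmf (rrh (Suc n)) (\<lambda>es. map_pmf (\<lambda>i. cnt es + of_bool (i = 0)) (pmf_of_set {..<Suc n}))"
    unfolding rrh.simps map_bind_pmf
  proof (intro bind_pmf_cong refl)
    fix es assume es: "es \<in> set_pmf (rrh (Suc n))"
    have "inv es" and L: "length es = Suc n" using rrh_inv[OF es] by auto
    show "map_pmf (rank_count 2) (map_pmf (\<lambda>i. es @ [es ! i \<union> {Suc (Suc n)}]) (pmf_of_set {..<length es}))
       = map_pmf (\<lambda>i. cnt es + of_bool (i = 0)) (pmf_of_set {..<Suc n})"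
      unfolding map_pmf_comp L
    proof (rule map_pmf_cong[OF refl])
      fix i assume "i \<in> set_pmf (pmf_of_set {..<Suc n})"
      then have i: "i < length es" using L by simp
      have "rank_count 2 (es @ [es ! i \<union> {Suc (length es)}]) = cnt es + of_bool (i = 0)"
        using rank_count_cnt[OF inv_step[OF \<open>inv es\<close> i]] cnt_step[OF \<open>inv es\<close> i] by simp
      then show "rank_count 2 (es @ [es ! i \<union> {Suc (Suc n)}]) = cnt es + of_bool (i = 0)"
        using L by simp
    qed
  qed
  also have "\<dots> = bind_pmf (rrh (Suc n)) (\<lambda>es. (\<lambda>c. map_pmf (\<lambda>i. c + of_bool (i = 0)) (pmf_of_set {..<Suc n})) (rank_count 2 es))"
    by (intro bind_pmf_cong refl) (simp add: rank_count_cnt rrh_inv)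
  also have "\<dots> = bind_pmf (D n) (\<lambda>c. map_pmf (\<lambda>i. c + of_bool (i = 0)) (pmf_of_set {..<Suc n}))"
    unfolding Suc.IH[symmetric] bind_map_pmf by simp
  also have "\<dots> = D (Suc n)"
    unfolding map_pmf_def D.simps by (rule bind_commute_pmf)
  finally show ?case .
qed

lemma pmf_D: "pmf (D n) r = real (stirling n r) / fact n"
proof (induction n arbitrary: r)
  case 0
  then show ?case by (cases r) (auto simp: indicator_def)
next
  case (Suc n)
  have "pmf (D (Suc n)) r = (\<Sum>i<Suc n. pmf (map_pmf (\<lambda>c. c + of_bool (i = 0)) (D n)) r) / real (Suc n)"
    by (simp only: D.simps, subst pmf_bind_pmf_of_set) auto
  also have "\<dots> = (pmf (map_pmf Suc (D n)) r + n * pmf (D n) r) / real (Suc n)"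
    by (subst sum.lessThan_Suc_shift) (simp del: sum.lessThan_Suc)
  also have "\<dots> = real (stirling (Suc n) r) / fact (Suc n)"
  proof (cases r)
    case 0
    have "pmf (map_pmf Suc (D n)) 0 = 0" by (simp add: pmf_eq_0_set_pmf)
    moreover have "real n * real (stirling n 0) = 0" by (cases n) auto
    ultimately show ?thesis using 0 Suc.IH by simp
  next
    case (Suc k)
    have "pmf (map_pmf Suc (D n)) (Suc k) = pmf (D n) k" by (simp add: pmf_map_inj')
    have a: "pmf (D n) k = real (stirling n k) / fact n" and b: "pmf (D n) (Suc k) = real (stirling n (Suc k)) / fact n"
      using Suc.IH by blast+
    have f: "(fact (Suc n) :: real) = real (Suc n) * fact n" by simp
    show ?thesis unfolding \<open>r = Suc k\<close> \<open>pmf (map_pmf Suc (D n)) (Suc k) = pmf (D n) k\<close> a b f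
      by (simp add: field_simps)
  qed
  finally show ?case .
qed

theorem mainTheorem7:
  fixes N r :: nat
  assumes "N \<ge> 1"
  shows "measure_pmf.prob (rrh N) {H. rank_count 2 H = r}
           = real (stirling (N - 1) r) / fact (N - 1)"
proof -
  obtain n where N: "N = Suc n" using assms by (cases N) auto
  have "measure_pmf.prob (rrh N) {H. rank_count 2 H = r} = pmf (map_pmf (rank_count 2) (rrh N)) r"
    by (simp add: pmf_map vimage_def)
  also have "\<dots> = pmf (D n) r" using map_rrh N by simp
  finally show ?thesis using pmf_D N by simp
qed

end
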